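(* For every $\epsilon>0$ there is a constant $C(\epsilon)>0$ such that $R_4(n)\le C(\epsilon)\, n^{1/2+\epsilon}$ for all positive integers $n$.
   Context: For a positive integer $n$, $R_4(n)$ denotes the number of ordered quadruples $(x,y,z,w)$ of positive integers with $n = xyzw + x + y + z + w$. *)

theory Defs
  imports Complex_Main
begin

definition R4 :: "nat \<Rightarrow> nat" where
  "R4 n = card {(x, y, z, w). (0::nat) < x \<and> 0 < y \<and> 0 < z \<and> 0 < w \<and> n = x * y * z * w + x + y + z + w}"

end

theory Submission imports Defs "HOL-Computational_Algebra.Primes" begin

definition divs :: "nat \<Rightarrow> nat set" where "divs m = {d. d dvd m}"

lemma divs_finite: "0 < m \<Longrightarrow> finite (divs m)"
  unfolding divs_def by (rule finite_divisors_nat)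

lemma divs_submult:
  assumes "0 < m" "0 < k"
  shows "card (divs (m*k)) \<le> card (divs m) * card (divs k)"
proof -
  have "divs (m*k) \<subseteq> (\<lambda>(u,v). u*v) ` (divs m \<times> divs k)"
  proof
    fix d assume "d \<in> divs (m*k)"
    then obtain u v where "d = u*v" "u dvd m" "v dvd k"
      unfolding divs_def using division_decomp by blast
    then show "d \<in> (\<lambda>(u,v). u*v) ` (divs m \<times> divs k)"
      unfolding divs_def by force
  qed
  hence "card (divs (m*k)) \<le> card ((\<lambda>(u,v). u*v) ` (divs m \<times> divs k))"
    by (intro card_mono) (auto intro!: finite_imageI simp: divs_finite assms)
  also have "\<dots> \<le> card (divs m \<times> divs k)"
    by (intro card_image_le) (auto simp: divs_finite assms)
  also have "\<dots> = card (divs m) * card (divs k)" by (rule card_cartesian_product)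
  finally show ?thesis .
qed

lemma divs_primepow:
  assumes "prime p"
  shows "card (divs (p^a)) \<le> a + 1"
proof -
  have "divs (p^a) = (\<lambda>i. p^i) ` {..a}"
    unfolding divs_def using divides_primepow_nat[OF assms] by auto
  hence "card (divs (p^a)) \<le> card {..a}" by (metis card_image_le finite_atMost)
  thus ?thesis by simp
qed

lemma two_pow_ge: "real (a+1) \<le> (2::real)^a"
  by (induction a) auto

lemma divisor_bound:
  assumes d: "(\<delta>::real) > 0"
  shows "\<exists>C>0. \<forall>m>0. real (card (divs m)) \<le> C * real m powr \<delta>"
proof -
  obtain N :: nat where N: "1/\<delta> \<le> N" using real_arch_simple by blast
  define K :: nat where "K = 2^N"
  define c where "c = \<delta> * ln 2"
  have c: "c > 0" using d by (simp add: c_def)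
  define B where "B = 1 + 1/c"
  have B1: "B \<ge> 1" using c by (simp add: B_def)
  have F1: "real (a+1) \<le> B * (real p powr \<delta>)^a" if "p \<ge> 2" for p a
  proof -
    have "(real p powr \<delta>)^a = real p powr (\<delta> * a)"
      using that by (simp add: powr_realpow[symmetric] powr_powr)
    also have "\<dots> \<ge> 2 powr (\<delta> * a)"
      using that d by (intro powr_mono2) auto
    finally have "(real p powr \<delta>)^a \<ge> exp (a * c)"
      by (simp add: powr_def c_def mult_ac)
    moreover have "exp (a*c) \<ge> 1 + a*c" by (rule exp_ge_add_one_self)
    ultimately have "(real p powr \<delta>)^a \<ge> 1 + a*c" by linarith
    hence "B * (real p powr \<delta>)^a \<ge> B * (1 + a*c)" using B1 by (intro mult_left_mono) auto
    moreover have "B * (1 + a*c) = 1 + a*c + 1/c + a" using c by (simp add: B_def field_simps)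
    moreover have "a*c \<ge> 0" "1/c \<ge> 0" using c by auto
    ultimately show ?thesis by (simp only: of_nat_add of_nat_1)
  qed
  have F2: "real (a+1) \<le> (real p powr \<delta>)^a" if "p \<ge> K" for p a
  proof -
    have K1: "real K \<ge> 1" by (simp add: K_def)
    have e1: "real K powr \<delta> \<le> real p powr \<delta>" using that d K1 by (intro powr_mono2) auto
    have e2: "real K powr \<delta> = 2 powr (N * \<delta>)" by (simp add: K_def powr_realpow[symmetric] powr_powr)
    have e3: "2 powr 1 \<le> 2 powr (N * \<delta>)"
      using N d by (intro powr_mono) (auto simp: field_simps)
    have "real p powr \<delta> \<ge> 2" using e1 e2 e3 by simp
    hence "(real p powr \<delta>)^a \<ge> 2^a" by (intro power_mono) auto
    thus ?thesis using two_pow_ge[of a] by linarith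
  qed
  define S where "S m = {q \<in> {..<K}. q dvd m}" for m
  have Sfin: "finite (S m)" for m unfolding S_def by auto
  have claim: "\<forall>m>0. real (card (divs m)) \<le> B ^ card (S m) * real m powr \<delta>" 
  proof (intro allI)
    fix m :: nat
    show "m > 0 \<longrightarrow> real (card (divs m)) \<le> B ^ card (S m) * real m powr \<delta>"
    proof (induction m rule: less_induct)
      case (less m)
      show ?case
      proof (intro impI)
        assume m0: "m > 0"
        show "real (card (divs m)) \<le> B ^ card (S m) * real m powr \<delta>"
        proof (cases "m = 1")
          case True
          have "divs 1 = {1}" by (auto simp: divs_def)
          moreover have "B ^ card (S m) \<ge> 1" using B1 by simp
          ultimately show ?thesis using True by simp
        next
          case False
          then obtain p where p: "prime p" "p dvd m" using prime_factor_nat by blast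
          have pu: "\<not> is_unit p" using p(1) prime_gt_1_nat by auto
          obtain r where r: "m = p ^ multiplicity p m * r" "\<not> p dvd r"
            using multiplicity_decompose'[of m p] m0 pu by auto
          define a where "a = multiplicity p m"
          have r': "m = p^a * r" using r a_def by simp
          have a0: "a \<noteq> 0" using r' r(2) p(2) by (cases a) auto
          have p2: "p \<ge> 2" using p(1) prime_ge_2_nat by blast
          have r0: "r > 0" using r' m0 by (cases r) auto
          have "p \<le> p^a" using p2 a0 by (intro self_le_power) auto
          hence "p^a \<ge> 2" using p2 by linarith
          hence rm: "r < m" using r' r0 n_less_m_mult_n[of r "p^a"] by simp
          have IH: "real (card (divs r)) \<le> B ^ card (S r) * real r powr \<delta>"
            using less.IH[OF rm] r0 by blast
          have pa0: "0 < p^a" using p2 by simp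
          have "card (divs m) \<le> card (divs (p^a)) * card (divs r)"
            using divs_submult[OF pa0 r0] r' by simp
          also have "\<dots> \<le> (a+1) * card (divs r)"
            using divs_primepow[OF p(1)] by (intro mult_right_mono) auto
          finally have dm: "real (card (divs m)) \<le> real (a+1) * real (card (divs r))"
            by (metis of_nat_le_iff of_nat_mult)
          have mp: "real m powr \<delta> = (real p powr \<delta>)^a * real r powr \<delta>"
            using r' p2 by (simp add: powr_mult powr_realpow[symmetric] powr_powr mult_ac)
          have Ssub: "S r \<subseteq> S m" unfolding S_def using r' by auto
          have Bpos: "B > 0" using B1 by simp
          have rp: "real r powr \<delta> \<ge> 0" by simp
          have dr0: "real (card (divs r)) \<ge> 0" by simp
          show ?thesis
          proof (cases "p < K")
            case True
            have pS: "p \<in> S m" "p \<notin> S r" using True p(2) r(2) by (auto simp: S_def)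
            have "S r \<subseteq> S m - {p}" using Ssub pS by auto
            hence "card (S r) \<le> card (S m - {p})" by (intro card_mono) (auto simp: Sfin)
            hence cS: "card (S r) + 1 \<le> card (S m)" using pS Sfin[of m] card_gt_0_iff[of "S m"] by (auto simp: card_Diff_singleton)
            have "real (card (divs m)) \<le> (B * (real p powr \<delta>)^a) * (B ^ card (S r) * real r powr \<delta>)"
              using dm F1[OF p2, of a] IH dr0 by (meson order_trans mult_mono of_nat_0_le_iff)
            also have "\<dots> = B ^ (card (S r) + 1) * real m powr \<delta>" by (simp add: mp mult_ac)
            also have "\<dots> \<le> B ^ card (S m) * real m powr \<delta>"
              using cS B1 by (intro mult_right_mono power_increasing) auto
            finally show ?thesis .
          next
            case False
            have cS: "card (S r) \<le> card (S m)" using Ssub by (intro card_mono) (auto simp: Sfin)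
            have "real (card (divs m)) \<le> ((real p powr \<delta>)^a) * (B ^ card (S r) * real r powr \<delta>)"
              using dm F2[of p a] False IH dr0 by (meson order_trans mult_mono of_nat_0_le_iff not_less)
            also have "\<dots> = B ^ (card (S r)) * real m powr \<delta>" by (simp add: mp mult_ac)
            also have "\<dots> \<le> B ^ card (S m) * real m powr \<delta>"
              using cS B1 by (intro mult_right_mono power_increasing) auto
            finally show ?thesis .
          qed
        qed
      qed
    qed
  qed
  show ?thesis
  proof (intro exI[of _ "B^K"] conjI allI impI)
    show "B^K > 0" using B1 by simp
    fix m :: nat assume "m > 0"
    have "card (S m) \<le> card {..<K}" unfolding S_def by (intro card_mono) auto
    hence "B ^ card (S m) \<le> B ^ K" using B1 by (intro power_increasing) auto
    thus "real (card (divs m)) \<le> B^K * real m powr \<delta>"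
      using claim \<open>m > 0\<close> by (meson order_trans mult_right_mono powr_ge_zero)
  qed
qed


lemma fiber_bound:
  assumes C: "\<forall>m>0. real (card (divs m)) \<le> C * real m powr \<eta>" and eta: "\<eta> > 0"
    and xy: "0 < x" "0 < y" "(x*y)^2 \<le> n" and n: "n > 0"
  shows "real (card {(z,w). 0 < z \<and> 0 < w \<and> n = x*y*z*w+x+y+z+w}) \<le> C * (2 powr \<eta> * real n powr (2*\<eta>))"
proof -
  define F where "F = {(z,w). 0 < z \<and> 0 < w \<and> n = x*y*z*w+x+y+z+w}"
  define M where "M = x*y*(n-x-y)+1"
  have M0: "M > 0" by (simp add: M_def)
  have inj: "inj_on (\<lambda>(z,w). x*y*z+1) F"
  proof (rule inj_onI, clarify)
    fix z w z' w' assume a: "(z,w) \<in> F" "(z',w') \<in> F" "x*y*z+1 = x*y*z'+1"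
    have zz: "z = z'" using a(3) xy by simp
    have "(x*y*z+1)*w = (x*y*z+1)*w'" using a(1,2) zz unfolding F_def by (simp add: algebra_simps)
    hence "w = w'" using mult_left_cancel[of "x*y*z+1" w w'] by (simp only: add_eq_0_iff_both_eq_0 one_neq_zero) simp
    thus "z = z' \<and> w = w'" using zz by simp
  qed
  have sub: "(\<lambda>(z,w). x*y*z+1) ` F \<subseteq> divs M"
  proof clarify
    fix z w assume "(z,w) \<in> F"
    hence e: "n - x - y = x*y*z*w + z + w" unfolding F_def by simp
    have "M = (x*y*z+1)*(x*y*w+1)" unfolding M_def e by (simp add: algebra_simps)
    hence "(x*y*z+1) dvd M" by (metis dvd_triv_left)
    thus "x*y*z+1 \<in> divs M" by (simp add: divs_def)
  qed
  have "card F = card ((\<lambda>(z,w). x*y*z+1) ` F)" using inj by (simp add: card_image)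
  also have "\<dots> \<le> card (divs M)" using sub by (intro card_mono divs_finite M0)
  finally have cF: "real (card F) \<le> C * real M powr \<eta>" using C M0 by (meson of_nat_le_iff order_trans)
  have xyn: "x*y \<le> n"
  proof -
    have "x*y \<le> (x*y)^2" using xy by (simp add: power2_eq_square)
    thus ?thesis using xy by linarith
  qed
  have "M \<le> n*n + 1" unfolding M_def using xyn by (intro add_mono mult_mono) auto
  also have "\<dots> \<le> 2*n^2" using n by (simp add: power2_eq_square)
  finally have "real M \<le> 2 * real n ^2" by (metis of_nat_le_iff of_nat_mult of_nat_numeral of_nat_power)
  hence "real M powr \<eta> \<le> (2 * real n^2) powr \<eta>" using eta M0 by (intro powr_mono2) auto
  also have "\<dots> = 2 powr \<eta> * real n powr (2*\<eta>)"
  proof -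
    have a: "real n ^ 2 = real n powr 2" using n by (simp add: powr_numeral)
    have "(2 * real n^2) powr \<eta> = 2 powr \<eta> * (real n ^2) powr \<eta>" using powr_mult[of 2 "real n ^2" \<eta>] by simp
    also have "(real n ^2) powr \<eta> = real n powr (2*\<eta>)" by (subst a) (rule powr_powr)
    finally show ?thesis .
  qed
  finally have "real M powr \<eta> \<le> 2 powr \<eta> * real n powr (2*\<eta>)" .
  moreover have "C \<ge> 0"
  proof -
    have "real (card (divs 1)) = 1" by (simp add: divs_def)
    thus ?thesis using C[rule_format, of 1] by simp
  qed
  ultimately show ?thesis using cF unfolding F_def by (meson mult_left_mono order_trans)
qed

lemma C_nonneg:
  assumes C: "\<forall>m>0. real (card (divs m)) \<le> C * real m powr \<eta>"
  shows "C \<ge> 0"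
proof -
  have "real (card (divs 1)) = 1" by (simp add: divs_def)
  thus ?thesis using C[rule_format, of 1] by simp
qed

lemma pair_bound:
  assumes C: "\<forall>m>0. real (card (divs m)) \<le> C * real m powr \<eta>" and eta: "\<eta> > 0" and n: "n > 0"
  shows "real (card {(x,y). 0 < x \<and> 0 < y \<and> (x*y)^2 \<le> n}) \<le> sqrt (real n) * (C * real n powr \<eta>)"
proof -
  define P where "P = {(x::nat,y::nat). 0 < x \<and> 0 < y \<and> (x*y)^2 \<le> n}"
  define T where "T = {k::nat. 0 < k \<and> k^2 \<le> n}"
  define t where "t = nat \<lfloor>sqrt (real n)\<rfloor>"
  have Tsub: "T \<subseteq> {1..t}"
  proof
    fix k assume "k \<in> T"
    hence k: "0 < k" "k^2 \<le> n" by (auto simp: T_def)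
    have "real k ^2 \<le> real n" using k(2) by (metis of_nat_le_iff of_nat_power)
    hence "real k \<le> sqrt (real n)" by (rule real_le_rsqrt)
    hence "k \<le> t" unfolding t_def by (metis le_nat_floor of_nat_le_iff floor_of_nat le_floor_iff nat_int)
    thus "k \<in> {1..t}" using k by auto
  qed
  have Tfin: "finite T" using Tsub finite_subset by blast
  have cT: "real (card T) \<le> sqrt (real n)"
  proof -
    have "card T \<le> t" using card_mono[OF _ Tsub] by simp
    hence "real (card T) \<le> real t" by simp
    also have "real t \<le> sqrt (real n)" unfolding t_def by simp
    finally show ?thesis .
  qed
  have inj: "inj_on (\<lambda>(x,y). (x*y, x)) P"
    by (rule inj_onI) (auto simp: P_def)
  have sub: "(\<lambda>(x,y). (x*y, x)) ` P \<subseteq> Sigma T divs"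
    by (auto simp: P_def T_def divs_def)
  have fin: "finite (Sigma T divs)" using Tfin by (intro finite_SigmaI) (auto simp: T_def divs_finite)
  have "card P \<le> card (Sigma T divs)"
    using card_image[OF inj] card_mono[OF fin sub] by simp
  also have "\<dots> = (\<Sum>k\<in>T. card (divs k))" using Tfin by (intro card_SigmaI) (auto simp: T_def divs_finite)
  finally have "real (card P) \<le> (\<Sum>k\<in>T. real (card (divs k)))" by (metis of_nat_le_iff of_nat_sum)
  also have "\<dots> \<le> (\<Sum>k\<in>T. C * real n powr \<eta>)"
  proof (intro sum_mono)
    fix k assume "k \<in> T"
    hence k: "0 < k" "k \<le> n"
      unfolding T_def using power2_nat_le_imp_le by (auto)
    have "real k powr \<eta> \<le> real n powr \<eta>" using k eta by (intro powr_mono2) auto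
    thus "real (card (divs k)) \<le> C * real n powr \<eta>"
      using C k C_nonneg[OF C] by (meson mult_left_mono order_trans)
  qed
  also have "\<dots> = real (card T) * (C * real n powr \<eta>)" by simp
  also have "\<dots> \<le> sqrt (real n) * (C * real n powr \<eta>)"
    using cT C_nonneg[OF C] by (intro mult_right_mono) auto
  finally show ?thesis unfolding P_def .
qed

lemma finF: "finite {(z::nat,w::nat). 0 < z \<and> 0 < w \<and> n = x*y*z*w+x+y+z+w}"
proof (rule finite_subset[of _ "{..n}\<times>{..n}"])
  show "{(z::nat,w::nat). 0 < z \<and> 0 < w \<and> n = x*y*z*w+x+y+z+w} \<subseteq> {..n}\<times>{..n}"
  proof
    fix q assume "q \<in> {(z::nat,w::nat). 0 < z \<and> 0 < w \<and> n = x*y*z*w+x+y+z+w}"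
    then obtain z w where "q = (z,w)" "n = x*y*z*w+x+y+z+w" by blast
    thus "q \<in> {..n}\<times>{..n}" by simp
  qed
qed simp
lemma fin4: "finite {(x::nat,y::nat,z::nat,w::nat). 0 < x \<and> 0 < y \<and> 0 < z \<and> 0 < w \<and> n = x*y*z*w+x+y+z+w \<and> P x y z w}"
proof (rule finite_subset[of _ "{..n}\<times>{..n}\<times>{..n}\<times>{..n}"])
  show "{(x::nat,y::nat,z::nat,w::nat). 0 < x \<and> 0 < y \<and> 0 < z \<and> 0 < w \<and> n = x*y*z*w+x+y+z+w \<and> P x y z w} \<subseteq> {..n}\<times>{..n}\<times>{..n}\<times>{..n}"
  proof
    fix q assume "q \<in> {(x::nat,y::nat,z::nat,w::nat). 0 < x \<and> 0 < y \<and> 0 < z \<and> 0 < w \<and> n = x*y*z*w+x+y+z+w \<and> P x y z w}"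
    then obtain x y z w where "q = (x,y,z,w)" "n = x*y*z*w+x+y+z+w" by blast
    thus "q \<in> {..n}\<times>{..n}\<times>{..n}\<times>{..n}" by simp
  qed
qed simp

lemma aux_le:
  assumes "0 < (a::nat)" "0 < b" "(a*b)^2 \<le> n" shows "a \<le> n \<and> b \<le> n"
proof -
  have "a \<le> a*b" "b \<le> a*b" using assms by auto
  moreover have "a*b \<le> (a*b)^2" by (simp add: power2_eq_square)
  ultimately show ?thesis using assms by linarith
qed

lemma Q1_bound:
  assumes C: "\<forall>m>0. real (card (divs m)) \<le> C * real m powr \<eta>" and eta: "\<eta> > 0" and n: "n > 0"
  shows "real (card {(x,y,z,w). (0::nat) < x \<and> 0 < y \<and> 0 < z \<and> 0 < w \<and> n = x*y*z*w+x+y+z+w \<and> (x*y)^2 \<le> n})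
     \<le> (sqrt (real n) * (C * real n powr \<eta>)) * (C * (2 powr \<eta> * real n powr (2*\<eta>)))"
    (is "real (card ?Q) \<le> ?A * ?B")
proof -
  define P where "P = {(x::nat,y::nat). 0 < x \<and> 0 < y \<and> (x*y)^2 \<le> n}"
  define F where "F = (\<lambda>(x::nat,y::nat). {(z::nat,w::nat). 0 < z \<and> 0 < w \<and> n = x*y*z*w+x+y+z+w})"
  have Pfin: "finite P"
  proof (rule finite_subset[of _ "{..n}\<times>{..n}"])
    show "P \<subseteq> {..n}\<times>{..n}"
    proof
      fix q assume "q \<in> P"
      then obtain x y where "q = (x,y)" "0 < x" "0 < y" "(x*y)^2 \<le> n" by (auto simp: P_def)
      thus "q \<in> {..n}\<times>{..n}" using aux_le[of x y n] by simp
    qed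
  qed simp
  have Ffin: "finite (F p)" for p
    by (cases p) (simp only: F_def prod.case finF)
  have sub: "?Q \<subseteq> (\<lambda>((x,y),(z,w)). (x,y,z,w)) ` Sigma P F"
  proof
    fix q assume "q \<in> ?Q"
    then obtain x y z w where q: "q = (x,y,z,w)" and
      a: "0 < x" "0 < y" "0 < z" "0 < w" "n = x*y*z*w+x+y+z+w" "(x*y)^2 \<le> n" by blast
    have "(x,y) \<in> P" using a(1,2,6) by (simp add: P_def)
    moreover have "(z,w) \<in> F (x,y)" using a(3,4,5) by (simp only: F_def prod.case mem_Collect_eq)
    ultimately have "((x,y),(z,w)) \<in> Sigma P F" by simp
    thus "q \<in> (\<lambda>((x,y),(z,w)). (x,y,z,w)) ` Sigma P F" using q by force
  qed
  have fS: "finite (Sigma P F)" using Pfin Ffin by auto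
  have "card ?Q \<le> card ((\<lambda>((x,y),(z,w)). (x,y,z,w)) ` Sigma P F)"
    using sub fS by (intro card_mono) auto
  also have "\<dots> \<le> card (Sigma P F)" using fS by (rule card_image_le)
  also have "\<dots> = (\<Sum>p\<in>P. card (F p))" using Pfin Ffin by (intro card_SigmaI) auto
  finally have "real (card ?Q) \<le> real (\<Sum>p\<in>P. card (F p))" by (simp only: of_nat_le_iff)
  hence "real (card ?Q) \<le> (\<Sum>p\<in>P. real (card (F p)))" by (simp only: of_nat_sum)
  also have "\<dots> \<le> (\<Sum>p\<in>P. ?B)"
  proof (intro sum_mono)
    fix p assume "p \<in> P"
    then obtain x y where p: "p = (x,y)" and h: "0 < x" "0 < y" "(x*y)^2 \<le> n" by (auto simp: P_def)
    have "real (card (F (x,y))) \<le> ?B" unfolding F_def prod.case by (rule fiber_bound[OF C eta h n])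
    thus "real (card (F p)) \<le> ?B" using p by simp
  qed
  also have "\<dots> = real (card P) * ?B" by simp
  also have "\<dots> \<le> ?A * ?B"
  proof -
    have cP: "real (card P) \<le> ?A" using pair_bound[OF C eta n] by (simp add: P_def)
    have B0: "0 \<le> ?B" using C_nonneg[OF C] by simp
    show ?thesis using cP B0 by (rule mult_right_mono)
  qed
  finally show ?thesis .
qed

theorem theorem5:
  fixes \<epsilon> :: real
  assumes "\<epsilon> > 0"
  shows "\<exists>C > 0. \<forall>n :: nat. n > 0 \<longrightarrow> real (R4 n) \<le> C * real n powr (1/2 + \<epsilon>)"
proof -
  define \<eta> where "\<eta> = \<epsilon>/3"
  have eta: "\<eta> > 0" using assms by (simp add: \<eta>_def)
  obtain C where C0: "C > 0" and C: "\<forall>m>0. real (card (divs m)) \<le> C * real m powr \<eta>"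
    using divisor_bound[OF eta] by blast
  define K where "K = 2 * (C * C * 2 powr \<eta>)"
  show ?thesis
  proof (intro exI[of _ K] conjI allI impI)
    show "K > 0" using C0 by (simp add: K_def)
    fix n :: nat assume n: "n > 0"
    define Q where "Q = {(x, y, z, w). (0::nat) < x \<and> 0 < y \<and> 0 < z \<and> 0 < w \<and> n = x * y * z * w + x + y + z + w}"
    define Q1 where "Q1 = {(x,y,z,w). (0::nat) < x \<and> 0 < y \<and> 0 < z \<and> 0 < w \<and> n = x*y*z*w+x+y+z+w \<and> (x*y)^2 \<le> n}"
    define h where "h = (\<lambda>(x::nat,y::nat,z::nat,w::nat). (z,w,x,y))"
    have Qsub: "Q \<subseteq> Q1 \<union> h ` Q1"
    proof clarify
      fix x y z w assume q: "(x,y,z,w) \<in> Q" and nq: "(x,y,z,w) \<notin> h ` Q1"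
      have e: "n = x*y*z*w+x+y+z+w" "0<x" "0<y" "0<z" "0<w" using q by (auto simp: Q_def)
      have "(z,w,x,y) \<notin> Q1" using nq by (force simp: h_def)
      hence zw: "\<not> (z*w)^2 \<le> n" using e by (auto simp: Q1_def algebra_simps)
      have le: "(x*y)*(z*w) \<le> n" using e(1) by (simp add: mult_ac)
      have "(x*y)^2 \<le> n"
      proof (rule ccontr)
        assume "\<not> (x*y)^2 \<le> n"
        hence "n < (x*y)^2" "n < (z*w)^2" using zw by auto
        hence "n*n < (x*y)^2 * (z*w)^2" using e(2-5) by (intro mult_strict_mono) auto
        also have "\<dots> = ((x*y)*(z*w))^2" by (simp add: power_mult_distrib)
        also have "\<dots> \<le> n^2" using le by (intro power_mono) auto
        finally show False by (simp add: power2_eq_square)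
      qed
      thus "(x,y,z,w) \<in> Q1" using e by (simp add: Q1_def)
    qed
    have Q1fin: "finite Q1" unfolding Q1_def by (rule fin4)
    have "card Q \<le> card (Q1 \<union> h ` Q1)" using Qsub Q1fin by (intro card_mono) auto
    also have "\<dots> \<le> card Q1 + card (h ` Q1)" by (rule card_Un_le)
    also have "\<dots> \<le> card Q1 + card Q1" using card_image_le[OF Q1fin] by simp
    finally have "real (R4 n) \<le> 2 * real (card Q1)" unfolding R4_def Q_def[symmetric] by simp
    also have "\<dots> \<le> 2 * ((sqrt (real n) * (C * real n powr \<eta>)) * (C * (2 powr \<eta> * real n powr (2*\<eta>))))"
      using Q1_bound[OF C eta n] unfolding Q1_def by simp
    also have "\<dots> = K * (real n powr (1/2) * real n powr \<eta> * real n powr (2*\<eta>))"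
      by (simp add: K_def powr_half_sqrt mult_ac)
    also have "\<dots> = K * real n powr (1/2 + \<epsilon>)"
      using n by (simp add: powr_add[symmetric] \<eta>_def add.commute)
    finally show "real (R4 n) \<le> K * real n powr (1/2 + \<epsilon>)" .
  qed
qed

end
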